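(* Let $n\ge 2$. Every equilibrium graph $G$ of $(1,1,\dots,1)$-BG (all $n$ budgets equal to $1$) in the SUM version has connected underlying graph $U(G)$, $U(G)$ has a unique cycle, this cycle has at most $5$ vertices, and every vertex is either on the cycle or adjacent in $U(G)$ to a vertex of the cycle.
   Context: Bounded budget network creation game $(b_1,\dots,b_n)$-BG: $n$ players with integer budgets $0\le b_i\le n-1$. A strategy of player $i$ is a set $S_i\subseteq\{1,\dots,n\}\setminus\{i\}$ with $|S_i|=b_i$; a profile is realized by the directed graph $G$ on $u_1,\dots,u_n$ with an arc $\overrightarrow{u_iu_j}$ iff $j\in S_i$. $U(G)$ is the undirected multigraph obtained by ignoring directions; if both $\overrightarrow{uv}$ and $\overrightarrow{vu}$ are arcs (a brace), $uv$ is a double edge of $U(G)$, regarded as a cycle with 2 vertices. $\operatorname{dist}(u,v)$ is the distance in $U(G)$, defined as $n^2$ between different components. SUM cost: $c_{SUM}(u)=\sum_v\operatorname{dist}(u,v)$. An equilibrium graph in the SUM version is a realization in which no vertex can decrease its SUM cost by changing its own strategy while the others are fixed. *)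

theory Defs
  imports Main
begin

definition valid_strategy :: "nat \<Rightarrow> (nat \<Rightarrow> nat) \<Rightarrow> nat \<Rightarrow> nat set \<Rightarrow> bool" where
  "valid_strategy n b i T \<longleftrightarrow> T \<subseteq> {..<n} - {i} \<and> card T = b i"

definition valid_profile :: "nat \<Rightarrow> (nat \<Rightarrow> nat) \<Rightarrow> (nat \<Rightarrow> nat set) \<Rightarrow> bool" where
  "valid_profile n b S \<longleftrightarrow> (\<forall>i<n. valid_strategy n b i (S i))"

definition arcs :: "nat \<Rightarrow> (nat \<Rightarrow> nat set) \<Rightarrow> (nat \<times> nat) set" where
  "arcs n S = {(i, j). i < n \<and> j < n \<and> j \<in> S i}"

definition adj :: "nat \<Rightarrow> (nat \<Rightarrow> nat set) \<Rightarrow> nat \<Rightarrow> nat \<Rightarrow> bool" where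
  "adj n S u v \<longleftrightarrow> (u, v) \<in> arcs n S \<or> (v, u) \<in> arcs n S"

definition walk_len :: "nat \<Rightarrow> (nat \<Rightarrow> nat set) \<Rightarrow> nat \<Rightarrow> nat \<Rightarrow> nat \<Rightarrow> bool" where
  "walk_len n S u v k \<longleftrightarrow>
     (\<exists>p :: nat \<Rightarrow> nat. p 0 = u \<and> p k = v \<and> (\<forall>i<k. adj n S (p i) (p (Suc i))))"

definition reachable :: "nat \<Rightarrow> (nat \<Rightarrow> nat set) \<Rightarrow> nat \<Rightarrow> nat \<Rightarrow> bool" where
  "reachable n S u v \<longleftrightarrow> (\<exists>k. walk_len n S u v k)"

text \<open>Distance in U(G); n^2 between different components.\<close>
definition gdist :: "nat \<Rightarrow> (nat \<Rightarrow> nat set) \<Rightarrow> nat \<Rightarrow> nat \<Rightarrow> nat" where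
  "gdist n S u v = (if reachable n S u v then (LEAST k. walk_len n S u v k) else n ^ 2)"

definition cost_sum :: "nat \<Rightarrow> (nat \<Rightarrow> nat set) \<Rightarrow> nat \<Rightarrow> nat" where
  "cost_sum n S u = (\<Sum>v<n. gdist n S u v)"

definition sum_equilibrium :: "nat \<Rightarrow> (nat \<Rightarrow> nat) \<Rightarrow> (nat \<Rightarrow> nat set) \<Rightarrow> bool" where
  "sum_equilibrium n b S \<longleftrightarrow> valid_profile n b S \<and>
     (\<forall>i<n. \<forall>T. valid_strategy n b i T \<longrightarrow> cost_sum n S i \<le> cost_sum n (S(i := T)) i)"

definition connected_U :: "nat \<Rightarrow> (nat \<Rightarrow> nat set) \<Rightarrow> bool" where
  "connected_U n S \<longleftrightarrow> (\<forall>u<n. \<forall>v<n. reachable n S u v)"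

text \<open>For k = 2 this is exactly a brace (double edge).\<close>
definition is_cycle :: "nat \<Rightarrow> (nat \<Rightarrow> nat set) \<Rightarrow> (nat \<times> nat) set \<Rightarrow> bool" where
  "is_cycle n S C \<longleftrightarrow>
     (\<exists>vs es. length vs \<ge> 2 \<and> length es = length vs \<and> distinct vs \<and> distinct es \<and>
        set es \<subseteq> arcs n S \<and> C = set es \<and>
        (\<forall>m<length vs. es ! m = (vs ! m, vs ! (Suc m mod length vs)) \<or>
                        es ! m = (vs ! (Suc m mod length vs), vs ! m)))"

definition cycle_vertices :: "(nat \<times> nat) set \<Rightarrow> nat set" where
  "cycle_vertices C = fst ` C \<union> snd ` C"

end

theory Submission
  imports Defs
begin


lemma adj_sym: "adj n S u v \<Longrightarrow> adj n S v u"
  by (auto simp: adj_def)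

lemma adj_lt: "adj n S u v \<Longrightarrow> u < n \<and> v < n"
  by (auto simp: adj_def arcs_def)

lemma walk_refl: "walk_len n S u u 0"
  unfolding walk_len_def by (rule exI[of _ "\<lambda>_. u"]) simp

lemma walk_0: "walk_len n S u v 0 \<longleftrightarrow> u = v"
  unfolding walk_len_def by auto

lemma walk_Suc: "walk_len n S u v (Suc k) \<longleftrightarrow> (\<exists>w. walk_len n S u w k \<and> adj n S w v)"
proof
  assume "walk_len n S u v (Suc k)"
  then obtain p where p: "p 0 = u" "p (Suc k) = v" "\<forall>i<Suc k. adj n S (p i) (p (Suc i))"
    unfolding walk_len_def by blast
  then have "walk_len n S u (p k) k" unfolding walk_len_def by auto
  moreover have "adj n S (p k) v" using p by auto
  ultimately show "\<exists>w. walk_len n S u w k \<and> adj n S w v" by blast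
next
  assume "\<exists>w. walk_len n S u w k \<and> adj n S w v"
  then obtain w p where p: "p 0 = u" "p k = w" "\<forall>i<k. adj n S (p i) (p (Suc i))" "adj n S w v"
    unfolding walk_len_def by blast
  define q where "q = p(Suc k := v)"
  have "q 0 = u" "q (Suc k) = v" using p by (auto simp: q_def)
  moreover have "\<forall>i<Suc k. adj n S (q i) (q (Suc i))"
    using p by (auto simp: q_def less_Suc_eq)
  ultimately show "walk_len n S u v (Suc k)" unfolding walk_len_def by blast
qed

lemma walk_1: "walk_len n S u v (Suc 0) \<longleftrightarrow> adj n S u v"
  by (simp add: walk_Suc walk_0)

lemma walk_2: "walk_len n S u v (Suc (Suc 0)) \<longleftrightarrow> (\<exists>w. adj n S u w \<and> adj n S w v)"
  by (simp add: walk_Suc walk_0)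

lemma walk_append: "walk_len n S u v k \<Longrightarrow> walk_len n S v w m \<Longrightarrow> walk_len n S u w (k + m)"
proof (induction m arbitrary: w)
  case 0 then show ?case by (simp add: walk_0)
next
  case (Suc m)
  then obtain w' where "walk_len n S v w' m" "adj n S w' w" by (auto simp: walk_Suc)
  then show ?case using Suc.IH Suc.prems by (auto simp: walk_Suc)
qed

lemma walk_Cons: "adj n S u w \<Longrightarrow> walk_len n S w v k \<Longrightarrow> walk_len n S u v (Suc k)"
  using walk_append[of n S u w "Suc 0" v k] by (simp add: walk_1)

lemma walk_rev: "walk_len n S u v k \<Longrightarrow> walk_len n S v u k"
proof (induction k arbitrary: v)
  case 0 then show ?case by (simp add: walk_0)
next
  case (Suc k)
  then obtain w where "walk_len n S u w k" "adj n S w v" by (auto simp: walk_Suc)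
  then show ?case using Suc.IH walk_Cons adj_sym by blast
qed

lemma reachable_walk: "walk_len n S u v k \<Longrightarrow> reachable n S u v"
  unfolding reachable_def by blast

lemma reachable_refl: "reachable n S u u"
  using reachable_walk walk_refl by metis

lemma reachable_sym: "reachable n S u v \<Longrightarrow> reachable n S v u"
  unfolding reachable_def using walk_rev by blast

lemma reachable_trans: "reachable n S u v \<Longrightarrow> reachable n S v w \<Longrightarrow> reachable n S u w"
  unfolding reachable_def using walk_append by blast

lemma gdist_le: "walk_len n S u v k \<Longrightarrow> gdist n S u v \<le> k"
  unfolding gdist_def by (auto simp: reachable_def intro: Least_le)

lemma gdist_walk: "reachable n S u v \<Longrightarrow> walk_len n S u v (gdist n S u v)"
  unfolding gdist_def reachable_def by (auto intro: LeastI)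

lemma gdist_ge: "reachable n S u v \<Longrightarrow> (\<And>k. k < m \<Longrightarrow> \<not> walk_len n S u v k) \<Longrightarrow> m \<le> gdist n S u v"
  using gdist_walk not_less by blast

lemma gdist_self: "gdist n S u u = 0"
  using gdist_le[OF walk_refl, of n S u] by simp

lemma gdist_pos: "reachable n S u v \<Longrightarrow> u \<noteq> v \<Longrightarrow> 1 \<le> gdist n S u v"
  using gdist_walk[of n S u v] walk_0[of n S u v] by (cases "gdist n S u v") auto

lemma gdist_step: "reachable n S u a \<Longrightarrow> adj n S a b \<Longrightarrow> gdist n S u b \<le> gdist n S u a + 1"
  using gdist_walk[of n S u a] gdist_le[of n S u b "Suc (gdist n S u a)"] walk_Suc by fastforce

lemma gdist_unreach: "\<not> reachable n S u v \<Longrightarrow> gdist n S u v = n^2"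
  unfolding gdist_def by simp

lemma walk_shortcut:
  assumes "p 0 = u" "p k = v" "\<forall>i<k. adj n S (p i) (p (Suc i))" "i < j" "j \<le> k" "p i = p j"
  shows "walk_len n S u v (k - (j - i))"
proof -
  define q where "q m = (if m \<le> i then p m else p (m + (j - i)))" for m
  have "q 0 = u" using assms by (simp add: q_def)
  moreover have "q (k - (j - i)) = v"
  proof (cases "k - (j - i) \<le> i")
    case True then have "k = j" using assms by linarith
    then show ?thesis using True assms by (simp add: q_def)
  next
    case False then show ?thesis using assms by (simp add: q_def)
  qed
  moreover have "\<forall>m<k - (j - i). adj n S (q m) (q (Suc m))"
  proof (intro allI impI)
    fix m assume m: "m < k - (j - i)"
    show "adj n S (q m) (q (Suc m))"
    proof (cases "m < i")
      case True then show ?thesis using assms m by (auto simp: q_def)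
    next
      case False
      then have "m + (j - i) < k" using m assms by auto
      then have "adj n S (p (m + (j - i))) (p (Suc (m + (j - i))))" using assms by auto
      then show ?thesis using False assms by (cases "m = i") (auto simp: q_def)
    qed
  qed
  ultimately show ?thesis unfolding walk_len_def by blast
qed

lemma shortest_walk:
  assumes "reachable n S u v"
  obtains p where "p 0 = u" "p (gdist n S u v) = v"
    "\<forall>i<gdist n S u v. adj n S (p i) (p (Suc i))" "inj_on p {..gdist n S u v}"
proof -
  let ?k = "gdist n S u v"
  obtain p where p: "p 0 = u" "p ?k = v" "\<forall>i<?k. adj n S (p i) (p (Suc i))"
    using gdist_walk[OF assms] unfolding walk_len_def by blast
  have *: False if "a < b" "b \<le> ?k" "p a = p b" for a b
  proof -
    have "walk_len n S u v (?k - (b - a))" using walk_shortcut[OF p that] .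
    then have "?k \<le> ?k - (b - a)" by (rule gdist_le)
    with that show False by simp
  qed
  have "inj_on p {..?k}"
  proof (rule inj_onI, rule ccontr)
    fix i j assume ij: "i \<in> {..?k}" "j \<in> {..?k}" "p i = p j" "i \<noteq> j"
    then show False using *[of i j] *[of j i] by (auto simp: linorder_neq_iff)
  qed
  then show ?thesis using p that by blast
qed

lemma potential_walk:
  fixes \<phi> :: "nat \<Rightarrow> nat"
  assumes "\<And>a b. adj n S a b \<Longrightarrow> \<phi> b \<le> \<phi> a + 1" "walk_len n S u v k"
  shows "\<phi> v \<le> \<phi> u + k"
  using assms(2)
proof (induction k arbitrary: v)
  case 0 then show ?case by (simp add: walk_0)
next
  case (Suc k)
  then obtain w where "walk_len n S u w k" "adj n S w v" by (auto simp: walk_Suc)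
  then show ?case using Suc.IH assms(1)[of w v] by fastforce
qed

lemma potential_dist:
  fixes \<phi> :: "nat \<Rightarrow> nat"
  shows "(\<And>a b. adj n S a b \<Longrightarrow> \<phi> b \<le> \<phi> a + 1) \<Longrightarrow> reachable n S u v \<Longrightarrow> \<phi> v \<le> \<phi> u + gdist n S u v"
  using potential_walk gdist_walk by blast

lemma transition:
  assumes "P (p m)" "\<not> P (p j)" "m \<le> j"
  shows "\<exists>i. m \<le> i \<and> i < j \<and> P (p i) \<and> \<not> P (p (Suc i))"
  using assms
proof (induction j)
  case 0 then show ?case by simp
next
  case (Suc j)
  have "m \<noteq> Suc j" using Suc.prems by auto
  then have mj: "m \<le> j" using Suc.prems by auto
  show ?case
  proof (cases "P (p j)")
    case True then show ?thesis using Suc.prems mj by auto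
  next
    case False
    then obtain i where "m \<le> i" "i < j" "P (p i)" "\<not> P (p (Suc i))" using Suc.IH Suc.prems mj by blast
    then show ?thesis by (intro exI[of _ i]) auto
  qed
qed

lemma gdist_lt_n:
  assumes "reachable n S u v" "u < n"
  shows "gdist n S u v < n"
proof -
  obtain p where p: "p 0 = u" "p (gdist n S u v) = v" "\<forall>i<gdist n S u v. adj n S (p i) (p (Suc i))"
    "inj_on p {..gdist n S u v}"
    using shortest_walk[OF assms(1)] by blast
  have "p ` {..gdist n S u v} \<subseteq> {..<n}"
  proof
    fix x assume "x \<in> p ` {..gdist n S u v}"
    then obtain i where i: "i \<le> gdist n S u v" "x = p i" by auto
    show "x \<in> {..<n}"
    proof (cases i)
      case 0 then show ?thesis using i p assms by auto
    next
      case (Suc j) then show ?thesis using i p adj_lt[of n S "p j" "p (Suc j)"] by auto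
    qed
  qed
  then have "card (p ` {..gdist n S u v}) \<le> n" by (metis card_lessThan card_mono finite_lessThan)
  moreover have "card (p ` {..gdist n S u v}) = Suc (gdist n S u v)" using p(4) by (simp add: card_image)
  ultimately show ?thesis by simp
qed

lemma gdist_le_sq: "u < n \<Longrightarrow> gdist n S u v \<le> n^2"
proof (cases "reachable n S u v")
  case True
  assume "u < n"
  then have "gdist n S u v < n" using gdist_lt_n True by blast
  moreover have "n \<le> n^2" by (simp add: power2_eq_square)
  ultimately show ?thesis by simp
qed (simp add: gdist_unreach)



definition Gf :: "(nat \<Rightarrow> nat) \<Rightarrow> nat \<Rightarrow> nat set" where "Gf g i = {g i}"

lemma adj_Gf: "adj n (Gf g) u v \<longleftrightarrow> u < n \<and> v < n \<and> (v = g u \<or> u = g v)"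
  by (auto simp: adj_def arcs_def Gf_def)

lemma arcs_Gf: "arcs n (Gf g) = {(i, g i) | i. i < n \<and> g i < n}"
  by (auto simp: arcs_def Gf_def)

lemma transfer_steps:
  assumes "\<forall>i<k. adj n (Gf g) (p i) (p (Suc i))"
    "\<forall>i<k. \<not> (p i = x \<and> p (Suc i) = g x) \<and> \<not> (p (Suc i) = x \<and> p i = g x)"
  shows "\<forall>i<k. adj n (Gf (g(x:=w))) (p i) (p (Suc i))"
proof (intro allI impI)
  fix i assume i: "i < k"
  let ?a = "p i" and ?b = "p (Suc i)"
  have a: "?a < n" "?b < n" "?b = g ?a \<or> ?a = g ?b" using assms(1) i by (auto simp: adj_Gf)
  have b: "\<not> (?a = x \<and> ?b = g x)" "\<not> (?b = x \<and> ?a = g x)" using assms(2) i by auto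
  show "adj n (Gf (g(x:=w))) ?a ?b"
    unfolding adj_Gf
  proof (intro conjI)
    show "?b = (g(x := w)) ?a \<or> ?a = (g(x := w)) ?b"
    proof (cases "?b = g ?a")
      case True
      then have "?a \<noteq> x" using b by blast
      then show ?thesis using True by simp
    next
      case False
      then have "?a = g ?b" using a by blast
      then have "?b \<noteq> x" using b by blast
      then show ?thesis using \<open>?a = g ?b\<close> by simp
    qed
  qed (use a in auto)
qed

lemma transfer_walk:
  assumes "p 0 = u" "p k = v" "\<forall>i<k. adj n (Gf g) (p i) (p (Suc i))"
    "\<forall>i<k. \<not> (p i = x \<and> p (Suc i) = g x) \<and> \<not> (p (Suc i) = x \<and> p i = g x)"
  shows "walk_len n (Gf (g(x:=w))) u v k"
  unfolding walk_len_def using transfer_steps[OF assms(3,4), of w] assms(1,2)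
  by (intro exI[of _ p]) simp

lemma transfer_walk_avoid:
  assumes "p 0 = u" "p k = v" "\<forall>i<k. adj n (Gf g) (p i) (p (Suc i))"
    "\<forall>i\<le>k. p i \<noteq> x"
  shows "walk_len n (Gf (g(x:=w))) u v k"
  using assms by (intro transfer_walk[of p u k v]) (auto simp: less_imp_le)

locale fg =
  fixes n :: nat and g :: "nat \<Rightarrow> nat"
  assumes gn: "\<And>i. i < n \<Longrightarrow> g i < n" and gne: "\<And>i. i < n \<Longrightarrow> g i \<noteq> i"
begin

definition per where "per v \<longleftrightarrow> v < n \<and> (\<exists>m>0. (g^^m) v = v)"

lemma iter_lt: "v < n \<Longrightarrow> (g^^m) v < n"
  by (induction m) (auto simp: gn)

lemma walk_iter: "v < n \<Longrightarrow> walk_len n (Gf g) v ((g^^m) v) m"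
proof (induction m)
  case 0 then show ?case by (simp add: walk_refl)
next
  case (Suc m)
  have a: "adj n (Gf g) ((g^^m) v) ((g^^Suc m) v)"
    using iter_lt[OF Suc.prems, of m] gn[of "(g^^m) v"] by (simp add: adj_Gf)
  show ?case using Suc a walk_Suc by blast
qed

lemma per_lt: "per v \<Longrightarrow> v < n" by (simp add: per_def)

lemma per_g: "per v \<Longrightarrow> per (g v)"
proof -
  assume "per v"
  then obtain m where m: "m > 0" "(g^^m) v = v" "v < n" unfolding per_def by blast
  have "(g^^m) (g v) = g ((g^^m) v)" by (rule funpow_swap1[symmetric])
  then have "(g^^m) (g v) = g v" using m by simp
  then show ?thesis using m gn unfolding per_def by blast
qed

lemma per_iter: "per v \<Longrightarrow> per ((g^^m) v)"
  by (induction m) (auto simp: per_g)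

lemma iter_mult: "(g^^m) v = v \<Longrightarrow> (g^^(m*j)) v = v"
proof (induction j)
  case 0 then show ?case by simp
next
  case (Suc j)
  have "(g^^(m * Suc j)) v = (g^^m) ((g^^(m*j)) v)" by (simp add: funpow_add)
  then show ?case using Suc by simp
qed

lemma iter_comm: "(g^^a) ((g^^b) v) = (g^^b) ((g^^a) v)"
proof -
  have "(g^^a) ((g^^b) v) = (g^^(a+b)) v" by (simp add: funpow_add)
  also have "\<dots> = (g^^(b+a)) v" by (simp add: add.commute)
  also have "\<dots> = (g^^b) ((g^^a) v)" by (simp add: funpow_add)
  finally show ?thesis .
qed

lemma iter_Suc_right: "(g^^(Suc m)) v = (g^^m) (g v)"
  by (simp only: funpow_Suc_right o_apply)

lemma pigeon:
  assumes "v < n"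
  shows "\<exists>i j. i < j \<and> j \<le> n \<and> (g^^i) v = (g^^j) v"
proof -
  have "\<not> inj_on (\<lambda>i. (g^^i) v) {..n}"
  proof
    assume inj: "inj_on (\<lambda>i. (g^^i) v) {..n}"
    have "(\<lambda>i. (g^^i) v) ` {..n} \<subseteq> {..<n}" using iter_lt assms by auto
    then have "card ((\<lambda>i. (g^^i) v) ` {..n}) \<le> n" by (metis card_lessThan card_mono finite_lessThan)
    moreover have "card ((\<lambda>i. (g^^i) v) ` {..n}) = Suc n" using inj by (simp add: card_image)
    ultimately show False by simp
  qed
  then obtain i j where "i \<in> {..n}" "j \<in> {..n}" "i \<noteq> j" "(g^^i) v = (g^^j) v"
    unfolding inj_on_def by blast
  then show ?thesis
  proof (cases "i < j")
    case True then show ?thesis using \<open>j \<in> {..n}\<close> \<open>(g^^i) v = (g^^j) v\<close> by auto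
  next
    case False then have "j < i" using \<open>i \<noteq> j\<close> by simp
    then show ?thesis using \<open>i \<in> {..n}\<close> \<open>(g^^i) v = (g^^j) v\<close>
      by (intro exI[of _ j] exI[of _ i]) auto
  qed
qed

lemma per_reach: "v < n \<Longrightarrow> per ((g^^n) v)"
proof -
  assume v: "v < n"
  obtain i j where ij: "i < j" "j \<le> n" "(g^^i) v = (g^^j) v" using pigeon[OF v] by blast
  have "(g^^(j - i)) ((g^^i) v) = (g^^((j - i) + i)) v" by (simp add: funpow_add)
  then have "(g^^(j - i)) ((g^^i) v) = (g^^j) v" using ij by simp
  then have "per ((g^^i) v)" using ij v iter_lt[OF v, of i] unfolding per_def
    by (intro conjI exI[of _ "j - i"]) auto
  then have pp: "per ((g^^(n - i)) ((g^^i) v))" by (rule per_iter)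
  have "(g^^(n - i)) ((g^^i) v) = (g^^((n - i) + i)) v" by (simp add: funpow_add)
  then have e: "(g^^(n - i)) ((g^^i) v) = (g^^n) v" using ij by simp
  show ?thesis using pp unfolding e .
qed

definition dep where "dep v = (LEAST m. per ((g^^m) v))"

lemma dep_ex: "v < n \<Longrightarrow> per ((g^^(dep v)) v)"
  unfolding dep_def by (rule LeastI[of _ n], rule per_reach)

lemma dep_0: "per v \<Longrightarrow> dep v = 0"
  unfolding dep_def by (rule Least_eq_0) simp

lemma dep_Suc:
  assumes "v < n" "\<not> per v"
  shows "dep v = Suc (dep (g v))"
proof -
  have d0: "dep v \<noteq> 0"
  proof
    assume "dep v = 0" then have "per v" using dep_ex[OF assms(1)] by simp
    with assms(2) show False by simp
  qed
  have "Suc (dep v - 1) = dep v" using d0 by simp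
  then have "(g^^(dep v - 1)) (g v) = (g^^(dep v)) v" using iter_Suc_right[of "dep v - 1" v] by simp
  then have "per ((g^^(dep v - 1)) (g v))"
    using dep_ex[OF assms(1)] by simp
  then have "dep (g v) \<le> dep v - 1" unfolding dep_def by (rule Least_le)
  moreover have "per ((g^^(Suc (dep (g v)))) v)"
    using dep_ex[OF gn[OF assms(1)]] iter_Suc_right[of "dep (g v)" v] by simp
  then have "dep v \<le> Suc (dep (g v))" unfolding dep_def by (rule Least_le)
  ultimately show ?thesis using d0 by linarith
qed

lemma per_inj:
  assumes "per a" "per b" "g a = g b"
  shows "a = b"
proof -
  obtain ma where ma: "ma > 0" "(g^^ma) a = a" using assms(1) unfolding per_def by blast
  obtain mb where mb: "mb > 0" "(g^^mb) b = b" using assms(2) unfolding per_def by blast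
  define M where "M = ma * mb"
  have M: "M > 0" using ma mb by (simp add: M_def)
  have "(g^^M) a = a" unfolding M_def by (rule iter_mult[OF ma(2)])
  moreover have "(g^^M) b = b" unfolding M_def using iter_mult[OF mb(2), of ma] by (simp add: mult.commute)
  moreover have "(g^^M) a = (g^^(M - 1)) (g a)" "(g^^M) b = (g^^(M - 1)) (g b)"
    using M iter_Suc_right[of "M - 1"] by simp_all
  ultimately show ?thesis using assms(3) by simp
qed

lemma per_pred:
  assumes "per c"
  obtains c' where "per c'" "g c' = c"
proof -
  obtain m where m: "m > 0" "(g^^m) c = c" using assms unfolding per_def by blast
  have "g ((g^^(m - 1)) c) = (g^^(Suc (m - 1))) c" by simp
  then have "g ((g^^(m - 1)) c) = c" using m by simp
  then show ?thesis using that per_iter[OF assms] by blast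
qed

lemma reach_iter: "v < n \<Longrightarrow> reachable n (Gf g) v ((g^^m) v)"
  using walk_iter reachable_walk by blast

end



context fg
begin

lemma iter_swap: "(g^^m) (g a) = g ((g^^m) a)"
  by (rule funpow_swap1[symmetric])

definition pend where "pend P a \<longleftrightarrow> a \<in> P \<and> P \<subseteq> {..<n} \<and> g a \<notin> P \<and>
   (\<forall>w<n. g w \<in> P \<longrightarrow> w \<in> P) \<and> (\<forall>w\<in>P. w \<noteq> a \<longrightarrow> g w \<in> P)"

lemma cross:
  assumes "pend P a" "adj n (Gf g) b c" "b \<in> P" "c \<notin> P"
  shows "b = a \<and> c = g a"
proof -
  have bc: "b < n" "c < n" "c = g b \<or> b = g c" using assms(2) by (auto simp: adj_Gf)
  show ?thesis
  proof (cases "c = g b")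
    case True
    then show ?thesis using assms(1,3,4) unfolding pend_def by metis
  next
    case False
    then have "b = g c" using bc by blast
    then have "c \<in> P" using assms(1,3) bc unfolding pend_def by blast
    then show ?thesis using assms(4) by blast
  qed
qed

lemma pend_tree:
  assumes "a < n" "\<not> per a"
  shows "pend {w. w < n \<and> (\<exists>m. (g^^m) w = a)} a"
  unfolding pend_def
proof (intro conjI allI impI ballI)
  show "a \<in> {w. w < n \<and> (\<exists>m. (g^^m) w = a)}" using assms by (auto intro: exI[of _ 0])
  show "{w. w < n \<and> (\<exists>m. (g^^m) w = a)} \<subseteq> {..<n}" by auto
  show "g a \<notin> {w. w < n \<and> (\<exists>m. (g^^m) w = a)}"
  proof
    assume "g a \<in> {w. w < n \<and> (\<exists>m. (g^^m) w = a)}"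
    then obtain m where "(g^^m) (g a) = a" by auto
    then have "(g^^(Suc m)) a = a" by (simp add: iter_swap)
    then have "per a" using assms(1) unfolding per_def by blast
    with assms(2) show False by simp
  qed
  fix w
  { assume "w < n" "g w \<in> {w. w < n \<and> (\<exists>m. (g^^m) w = a)}"
    then obtain m where "(g^^m) (g w) = a" by auto
    then have "(g^^(Suc m)) w = a" by (simp add: iter_swap)
    then show "w \<in> {w. w < n \<and> (\<exists>m. (g^^m) w = a)}" using \<open>w < n\<close> by blast }
  { assume w: "w \<in> {w. w < n \<and> (\<exists>m. (g^^m) w = a)}" "w \<noteq> a"
    then obtain m where m: "(g^^m) w = a" "w < n" by auto
    have "m \<noteq> 0"
    proof
      assume "m = 0" then have "w = a" using m by simp
      with w(2) show False by simp
    qed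
    then have "(g^^(m - 1)) (g w) = a" using m by (cases m) (simp_all add: iter_swap)
    then show "g w \<in> {w. w < n \<and> (\<exists>m. (g^^m) w = a)}" using gn[OF m(2)] by blast }
qed

lemma adj_upd: "a < n \<Longrightarrow> a \<noteq> x \<Longrightarrow> adj n (Gf (g(x:=w))) a (g a)"
  using gn by (simp add: adj_Gf)

lemma adj_upd_new: "x < n \<Longrightarrow> w < n \<Longrightarrow> adj n (Gf (g(x:=w))) x w"
  by (simp add: adj_Gf)

end

locale eqg = fg +
  assumes eq: "\<And>x w. x < n \<Longrightarrow> w < n \<Longrightarrow> w \<noteq> x \<Longrightarrow>
     cost_sum n (Gf g) x \<le> cost_sum n (Gf (g(x:=w))) x"
begin

lemma back_walk:
  assumes "per x"
  shows "walk_len n (Gf (g(x:=w))) (g x) x (Suc 0 * 0 + (LEAST q. q > 0 \<and> (g^^q) x = x) - 1)"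
proof -
  define q where "q = (LEAST q. q > 0 \<and> (g^^q) x = x)"
  have qx: "q > 0 \<and> (g^^q) x = x" using assms unfolding per_def q_def by (metis (mono_tags, lifting) LeastI)
  have minq: "(g^^i) x \<noteq> x" if "0 < i" "i < q" for i
    using not_less_Least[of i "\<lambda>q. q > 0 \<and> (g^^q) x = x"] that q_def by blast
  define p where "p i = (g^^(Suc i)) x" for i
  have x: "x < n" using assms by (simp add: per_def)
  have "p 0 = g x" by (simp add: p_def)
  moreover have "p (q - 1) = x" using qx by (simp add: p_def)
  moreover have "\<forall>i<q - 1. adj n (Gf (g(x:=w))) (p i) (p (Suc i))"
  proof (intro allI impI)
    fix i assume "i < q - 1"
    then have "p i \<noteq> x" using minq[of "Suc i"] by (simp add: p_def)
    moreover have "p i < n" using iter_lt[OF x, of "Suc i"] by (simp add: p_def)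
    ultimately show "adj n (Gf (g(x:=w))) (p i) (p (Suc i))" using adj_upd by (simp add: p_def)
  qed
  ultimately show ?thesis unfolding walk_len_def q_def[symmetric] by auto
qed

lemma conn: "u < n \<Longrightarrow> v < n \<Longrightarrow> reachable n (Gf g) u v"
proof (rule ccontr)
  assume u: "u < n" and v: "v < n" and nr: "\<not> reachable n (Gf g) u v"
  define x where "x = (g^^n) u"
  have px: "per x" unfolding x_def using per_reach[OF u] .
  have x: "x < n" using px per_lt by blast
  have "reachable n (Gf g) u x" unfolding x_def using reach_iter[OF u] .
  then have nrx: "\<not> reachable n (Gf g) x v" using nr reachable_trans by blast
  then have vx: "v \<noteq> x" using reachable_refl by metis
  define g' where "g' = g(x := v)"
  let ?R = "reachable n (Gf g')"
  have Rgx: "?R x (g x)"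
    using back_walk[OF px, of v] unfolding g'_def by (meson reachable_sym reachable_walk)
  have clos: "?R x b" if "?R x a" "adj n (Gf g) a b" for a b
  proof -
    have ab: "a < n" "b < n" "b = g a \<or> a = g b" using that(2) by (auto simp: adj_Gf)
    show ?thesis
    proof (cases "b = g a")
      case True
      show ?thesis
      proof (cases "a = x")
        case True then show ?thesis using Rgx \<open>b = g a\<close> by simp
      next
        case False
        then have "adj n (Gf g') a b" using adj_upd[OF ab(1) False] \<open>b = g a\<close> unfolding g'_def by simp
        then show ?thesis using that(1) reachable_trans reachable_walk walk_1 by metis
      qed
    next
      case False
      then have agb: "a = g b" using ab by blast
      show ?thesis
      proof (cases "b = x")
        case True then show ?thesis using reachable_refl by metis
      next
        case False
        then have "adj n (Gf g') b a" using adj_upd[OF ab(2) False] agb unfolding g'_def by simp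
        then have "adj n (Gf g') a b" by (rule adj_sym)
        then show ?thesis using that(1) reachable_trans reachable_walk walk_1 by metis
      qed
    qed
  qed
  have clos_walk: "?R x z" if "walk_len n (Gf g) y z k" "?R x y" for y z k
    using that
  proof (induction k arbitrary: z)
    case 0 then show ?case by (simp add: walk_0)
  next
    case (Suc k)
    then obtain w where "walk_len n (Gf g) y w k" "adj n (Gf g) w z" by (auto simp: walk_Suc)
    then show ?case using Suc clos by blast
  qed
  have h1: "?R x y" if "reachable n (Gf g) x y" for y
    using that clos_walk reachable_refl unfolding reachable_def by metis
  have Rv: "?R x v" using adj_upd_new[OF x v] unfolding g'_def by (meson reachable_walk walk_1)
  have h2: "?R x y" if "reachable n (Gf g) v y" for y
    using that clos_walk Rv unfolding reachable_def by metis
  define I1 where "I1 y = (if reachable n (Gf g) v y then n^2 else 0)" for y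
  define I2 where "I2 y = (if reachable n (Gf g) x y \<or> reachable n (Gf g) v y then n - 1 else 0)" for y
  have pv: "gdist n (Gf g') x y + I1 y \<le> gdist n (Gf g) x y + I2 y" if y: "y < n" for y
  proof -
    consider (a) "reachable n (Gf g) x y" | (b) "reachable n (Gf g) v y" "\<not> reachable n (Gf g) x y"
      | (c) "\<not> reachable n (Gf g) x y" "\<not> reachable n (Gf g) v y" by blast
    then show ?thesis
    proof cases
      case a
      then have "\<not> reachable n (Gf g) v y" using nrx reachable_trans reachable_sym by metis
      moreover have "gdist n (Gf g') x y < n" using gdist_lt_n[OF h1[OF a] x] .
      ultimately show ?thesis using a by (simp add: I1_def I2_def)
    next
      case b
      have "gdist n (Gf g') x y < n" using gdist_lt_n[OF h2[OF b(1)] x] .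
      moreover have "gdist n (Gf g) x y = n^2" using b(2) by (rule gdist_unreach)
      ultimately show ?thesis using b by (simp add: I1_def I2_def)
    next
      case c
      have "gdist n (Gf g') x y \<le> n^2" using gdist_le_sq[OF x] .
      moreover have "gdist n (Gf g) x y = n^2" using c(1) by (rule gdist_unreach)
      ultimately show ?thesis using c by (simp add: I1_def I2_def)
    qed
  qed
  have "(\<Sum>y<n. gdist n (Gf g') x y + I1 y) \<le> (\<Sum>y<n. gdist n (Gf g) x y + I2 y)"
    by (rule sum_mono) (use pv in auto)
  then have s1: "cost_sum n (Gf g') x + (\<Sum>y<n. I1 y) \<le> cost_sum n (Gf g) x + (\<Sum>y<n. I2 y)"
    by (simp add: sum.distrib cost_sum_def)
  have "(\<Sum>y<n. I2 y) \<le> (\<Sum>y<n. n - 1)" by (rule sum_mono) (simp add: I2_def)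
  then have s2: "(\<Sum>y<n. I2 y) \<le> n * (n - 1)" by simp
  have "I1 v \<le> (\<Sum>y<n. I1 y)" by (rule member_le_sum) (use v in auto)
  then have s3: "n^2 \<le> (\<Sum>y<n. I1 y)" using reachable_refl by (metis I1_def)
  have s4: "n * (n - 1) < n^2" using v by (cases n) (auto simp: power2_eq_square)
  have "cost_sum n (Gf g') x < cost_sum n (Gf g) x" using s1 s2 s3 s4 by linarith
  moreover have "cost_sum n (Gf g) x \<le> cost_sum n (Gf g') x" unfolding g'_def using eq[OF x v vx] .
  ultimately show False by simp
qed

lemma orbit:
  assumes "per x" "per c"
  shows "\<exists>m. c = (g^^m) x"
proof -
  have main: "\<exists>m j. (g^^m) v = (g^^j) x" if "walk_len n (Gf g) x v k" for v k
    using that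
  proof (induction k arbitrary: v)
    case 0 then show ?case by (auto simp: walk_0 intro: exI[of _ 0])
  next
    case (Suc k)
    then obtain w where w: "walk_len n (Gf g) x w k" "adj n (Gf g) w v" by (auto simp: walk_Suc)
    obtain m j where mj: "(g^^m) w = (g^^j) x" using Suc.IH[OF w(1)] by blast
    have "v = g w \<or> w = g v" using w(2) by (auto simp: adj_Gf)
    then show ?case
    proof
      assume vw: "v = g w"
      show ?thesis
      proof (cases m)
        case 0
        then have "v = (g^^(Suc j)) x" using mj vw by simp
        then show ?thesis by (intro exI[of _ 0] exI[of _ "Suc j"]) auto
      next
        case (Suc m')
        then have "(g^^m') v = (g^^j) x" using mj vw by (simp add: iter_swap)
        then show ?thesis by blast
      qed
    next
      assume "w = g v"
      then have "(g^^(Suc m)) v = (g^^j) x" using mj by (simp add: iter_swap)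
      then show ?thesis by blast
    qed
  qed
  have "reachable n (Gf g) x c" using conn assms per_lt by blast
  then obtain k where "walk_len n (Gf g) x c k" unfolding reachable_def by blast
  then obtain m j where mj: "(g^^m) c = (g^^j) x" using main by blast
  obtain q where q: "q > 0" "(g^^q) c = c" using assms(2) unfolding per_def by blast
  have "(g^^(q*m)) c = c" using iter_mult[OF q(2)] .
  moreover have "q * m \<ge> m" using q by simp
  have "(g^^(q*m - m)) ((g^^m) c) = (g^^(q*m - m + m)) c" by (simp add: funpow_add)
  then have "(g^^(q*m)) c = (g^^(q*m - m)) ((g^^m) c)" using \<open>q * m \<ge> m\<close> by simp
  ultimately have "c = (g^^(q*m - m)) ((g^^j) x)" using mj by simp
  then have "c = (g^^(q*m - m + j)) x" by (simp add: funpow_add)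
  then show ?thesis by blast
qed

end



lemma transfer_step_gen:
  assumes "adj n (Gf g) a b" "\<not> (a = x \<and> b = g x)" "\<not> (b = x \<and> a = g x)"
  shows "adj n (Gf (g(x:=w))) a b"
  using transfer_steps[of "Suc 0" n g "\<lambda>i. if i = 0 then a else b" x w] assms by auto

lemma transfer_step: "adj n (Gf g) a b \<Longrightarrow> a \<noteq> x \<Longrightarrow> b \<noteq> x \<Longrightarrow> adj n (Gf (g(x:=w))) a b"
  using transfer_step_gen by blast

lemma walk_of_steps: "q 0 = u \<Longrightarrow> q k = v \<Longrightarrow> (\<forall>i<k. adj n S (q i) (q (Suc i))) \<Longrightarrow> walk_len n S u v k"
  unfolding walk_len_def by blast

lemma sum_lt_ex:
  fixes f h :: "nat \<Rightarrow> nat"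
  assumes "\<And>v. v < n \<Longrightarrow> f v \<le> h v" "z < n" "f z < h z"
  shows "(\<Sum>v<n. f v) < (\<Sum>v<n. h v)"
  using assms by (intro sum_strict_mono_ex1) auto

context eqg
begin

lemma dist_step: "a < n \<Longrightarrow> u < n \<Longrightarrow> adj n (Gf g) a b \<Longrightarrow> gdist n (Gf g) u b \<le> gdist n (Gf g) u a + 1"
  using gdist_step conn by blast

lemma L1:
  assumes P: "pend P a" and u: "u \<in> P" and v: "v < n" "v \<notin> P"
  shows "gdist n (Gf g) u a + 1 + gdist n (Gf g) (g a) v \<le> gdist n (Gf g) u v"
proof -
  let ?d = "gdist n (Gf g)"
  have Pn: "P \<subseteq> {..<n}" "a \<in> P" "g a \<notin> P" using P by (auto simp: pend_def)
  have un: "u < n" using Pn u by auto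
  have an: "a < n" using Pn by auto
  have gan: "g a < n" using gn[OF an] .
  define ph where "ph w = (if w \<in> P then ?d u w else ?d u a + 1 + ?d (g a) w)" for w
  have lip: "ph c \<le> ph b + 1" if "adj n (Gf g) b c" for b c
  proof -
    have bc: "b < n" "c < n" using that adj_lt by auto
    consider "b \<in> P" "c \<in> P" | "b \<notin> P" "c \<notin> P" | "b \<in> P" "c \<notin> P" | "b \<notin> P" "c \<in> P" by blast
    then show ?thesis
    proof cases
      case 1 then show ?thesis using dist_step[OF bc(1) un that] by (simp add: ph_def)
    next
      case 2 then show ?thesis using dist_step[OF bc(1) gan that] by (simp add: ph_def)
    next
      case 3 then have "b = a" "c = g a" using cross[OF P that] by auto
      then show ?thesis using 3 by (simp add: ph_def gdist_self)
    next
      case 4 then have "c = a" "b = g a" using cross[OF P adj_sym[OF that]] by auto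
      then show ?thesis using 4 by (simp add: ph_def gdist_self)
    qed
  qed
  have "ph v \<le> ph u + ?d u v" using potential_dist[of n "Gf g" ph u v] lip conn[OF un v(1)] by blast
  then show ?thesis using u v by (simp add: ph_def gdist_self)
qed

lemma L2:
  assumes P: "pend P a" and u: "u < n" "u \<notin> P" and v: "v \<in> P"
  shows "gdist n (Gf g) u (g a) + 1 + gdist n (Gf g) a v \<le> gdist n (Gf g) u v"
proof -
  let ?d = "gdist n (Gf g)"
  have Pn: "P \<subseteq> {..<n}" "a \<in> P" "g a \<notin> P" using P by (auto simp: pend_def)
  have vn: "v < n" using Pn v by auto
  have an: "a < n" using Pn by auto
  define ph where "ph w = (if w \<in> P then ?d u (g a) + 1 + ?d a w else ?d u w)" for w
  have lip: "ph c \<le> ph b + 1" if "adj n (Gf g) b c" for b c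
  proof -
    have bc: "b < n" "c < n" using that adj_lt by auto
    consider "b \<in> P" "c \<in> P" | "b \<notin> P" "c \<notin> P" | "b \<in> P" "c \<notin> P" | "b \<notin> P" "c \<in> P" by blast
    then show ?thesis
    proof cases
      case 1 then show ?thesis using dist_step[OF bc(1) an that] by (simp add: ph_def)
    next
      case 2 then show ?thesis using dist_step[OF bc(1) u(1) that] by (simp add: ph_def)
    next
      case 3 then have "b = a" "c = g a" using cross[OF P that] by auto
      then show ?thesis using 3 by (simp add: ph_def gdist_self)
    next
      case 4 then have "c = a" "b = g a" using cross[OF P adj_sym[OF that]] by auto
      then show ?thesis using 4 by (simp add: ph_def gdist_self)
    qed
  qed
  have "ph v \<le> ph u + ?d u v" using potential_dist[of n "Gf g" ph u v] lip conn[OF u(1) vn] by blast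
  then show ?thesis using u v by (simp add: ph_def gdist_self)
qed

lemma stay:
  assumes P: "pend P a" and u: "u < n" and v: "v < n" and uv: "u \<in> P \<longleftrightarrow> v \<in> P"
  obtains p where "p 0 = u" "p (gdist n (Gf g) u v) = v"
    "\<forall>i<gdist n (Gf g) u v. adj n (Gf g) (p i) (p (Suc i))"
    "\<forall>i\<le>gdist n (Gf g) u v. (p i \<in> P \<longleftrightarrow> u \<in> P)"
proof -
  let ?k = "gdist n (Gf g) u v"
  obtain p where p: "p 0 = u" "p ?k = v" "\<forall>i<?k. adj n (Gf g) (p i) (p (Suc i))" "inj_on p {..?k}"
    using shortest_walk[OF conn[OF u v]] by blast
  have inj: "i = j" if "i \<le> ?k" "j \<le> ?k" "p i = p j" for i j
    using inj_onD[OF p(4) that(3)] that by auto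
  have all: "\<forall>i\<le>?k. (p i \<in> P \<longleftrightarrow> u \<in> P)"
  proof (rule ccontr)
    assume "\<not> (\<forall>i\<le>?k. (p i \<in> P \<longleftrightarrow> u \<in> P))"
    then obtain i where i: "i \<le> ?k" "(p i \<in> P) \<noteq> (u \<in> P)" by auto
    show False
    proof (cases "u \<in> P")
      case True
      then have h: "p i \<notin> P" "p 0 \<in> P" "p ?k \<in> P" using i p uv by auto
      obtain i1 where i1: "i1 < i" "p i1 \<in> P" "p (Suc i1) \<notin> P"
        using transition[of "\<lambda>x. x \<in> P" p 0 i] h by auto
      obtain i2 where i2: "i \<le> i2" "i2 < ?k" "p i2 \<notin> P" "p (Suc i2) \<in> P"
        using transition[of "\<lambda>x. x \<notin> P" p i ?k] h i by auto
      have "p i1 = a" using cross[OF P _ i1(2) i1(3)] p(3) i1 i by auto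
      moreover have "p (Suc i2) = a" using cross[OF P adj_sym[OF p(3)[rule_format, of i2]] i2(4) i2(3)] i2 by auto
      ultimately have "i1 = Suc i2" using inj[of i1 "Suc i2"] i1 i2 i by auto
      then show False using i1 i2 by auto
    next
      case False
      then have h: "p i \<in> P" "p 0 \<notin> P" "p ?k \<notin> P" using i p uv by auto
      obtain i1 where i1: "i1 < i" "p i1 \<notin> P" "p (Suc i1) \<in> P"
        using transition[of "\<lambda>x. x \<notin> P" p 0 i] h by auto
      obtain i2 where i2: "i \<le> i2" "i2 < ?k" "p i2 \<in> P" "p (Suc i2) \<notin> P"
        using transition[of "\<lambda>x. x \<in> P" p i ?k] h i by auto
      have "p i1 = g a" using cross[OF P adj_sym[OF p(3)[rule_format, of i1]] i1(3) i1(2)] i1 i by auto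
      moreover have "p (Suc i2) = g a" using cross[OF P p(3)[rule_format, of i2] i2(3) i2(4)] i2 by auto
      ultimately have "i1 = Suc i2" using inj[of i1 "Suc i2"] i1 i2 i by auto
      then show False using i1 i2 by auto
    qed
  qed
  show ?thesis using that[OF p(1,2,3) all] .
qed

lemma dev_plus1:
  assumes x: "x < n" and w: "w < n" "w \<noteq> x" and aw: "adj n (Gf (g(x:=w))) w (g x)" and v: "v < n"
  shows "gdist n (Gf (g(x:=w))) x v \<le> gdist n (Gf g) x v + 1"
proof -
  let ?k = "gdist n (Gf g) x v"
  let ?S = "Gf (g(x:=w))"
  obtain p where p: "p 0 = x" "p ?k = v" "\<forall>i<?k. adj n (Gf g) (p i) (p (Suc i))" "inj_on p {..?k}"
    using shortest_walk[OF conn[OF x v]] by blast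
  have nx: "p i \<noteq> x" if "0 < i" "i \<le> ?k" for i
    using inj_onD[OF p(4), of i 0] that p(1) by auto
  have later: "adj n ?S (p i) (p (Suc i))" if "0 < i" "i < ?k" for i
    using transfer_step[OF p(3)[rule_format, of i]] nx[of i] nx[of "Suc i"] that by auto
  show ?thesis
  proof (cases "?k = 0")
    case True then have "v = x" using p by simp
    then show ?thesis by (simp add: gdist_self)
  next
    case k0: False
    show ?thesis
    proof (cases "p 1 = g x")
      case False
      have "adj n ?S (p 0) (p (Suc 0))"
        using transfer_step_gen[OF p(3)[rule_format, of 0]] k0 False nx[of 1] p(1) by auto
      then have st: "\<forall>i<?k. adj n ?S (p i) (p (Suc i))"
        using later by (metis neq0_conv)
      have "walk_len n ?S x v ?k" using walk_of_steps[of p x ?k v, OF p(1,2) st] .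
      then show ?thesis using gdist_le by fastforce
    next
      case True
      define q where "q i = (if i = 0 then x else if i = 1 then w else p (i - 1))" for i
      have "walk_len n ?S x v (Suc ?k)"
      proof (rule walk_of_steps[of q])
        show "q 0 = x" by (simp add: q_def)
        show "q (Suc ?k) = v" using p(2) k0 by (simp add: q_def)
        show "\<forall>i<Suc ?k. adj n ?S (q i) (q (Suc i))"
        proof (intro allI impI)
        fix i assume i: "i < Suc ?k"
        show "adj n ?S (q i) (q (Suc i))"
        proof (cases "i = 0")
          case True then show ?thesis using adj_upd_new[OF x w(1)] by (simp add: q_def)
        next
          case i0: False
          show ?thesis
          proof (cases "i = 1")
            case True then show ?thesis using aw \<open>p 1 = g x\<close> by (simp add: q_def)
          next
            case False
            then have "q i = p (i - 1)" "q (Suc i) = p (Suc (i - 1))" using i0 by (auto simp: q_def)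
            moreover have "adj n ?S (p (i - 1)) (p (Suc (i - 1)))"
              using later[of "i - 1"] i i0 False by auto
            ultimately show ?thesis by simp
          qed
        qed
        qed
      qed
      then show ?thesis using gdist_le by fastforce
    qed
  qed
qed

end



context eqg
begin

lemma ex_z:
  "v < n \<Longrightarrow> \<not> per v \<Longrightarrow> \<not> per (g v) \<Longrightarrow> \<exists>z<n. \<not> per z \<and> \<not> per (g z) \<and> per (g (g z))"
proof (induction "dep v" arbitrary: v rule: less_induct)
  case less
  show ?case
  proof (cases "per (g (g v))")
    case True then show ?thesis using less by blast
  next
    case False
    have "dep (g v) < dep v" using dep_Suc[OF less.prems(1,2)] by simp
    then show ?thesis using less.hyps[of "g v"] gn less.prems False by blast
  qed
qed

lemma walk_stay_transfer:
  assumes "p 0 = u" "p k = v" "\<forall>i<k. adj n (Gf g) (p i) (p (Suc i))" "\<forall>i\<le>k. p i \<noteq> x"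
  shows "gdist n (Gf (g(x:=w))) u v \<le> k"
proof -
  have "walk_len n (Gf (g(x:=w))) u v k"
    using transfer_walk_avoid[OF assms] .
  then show ?thesis by (rule gdist_le)
qed

lemma depth1:
  assumes vn: "v < n"
  shows "per v \<or> per (g v)"
proof (rule ccontr)
  assume "\<not> (per v \<or> per (g v))"
  then obtain z where z: "z < n" "\<not> per z" "\<not> per (g z)" "per (g (g z))" using ex_z vn by blast
  define y where "y = g z"
  define c where "c = g y"
  have y: "y < n" "\<not> per y" "y \<noteq> z" using z gn gne unfolding y_def by auto
  have c: "per c" "c < n" using z unfolding c_def y_def by (auto simp: per_def)
  obtain c' where c': "per c'" "g c' = c" using per_pred[OF c(1)] by blast
  have c'n: "c' < n" using c' per_lt by blast
  have cc': "c' \<noteq> c" using gne[OF c'n] c' by auto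
  have yc': "y \<noteq> c'" using y c' by auto
  define A where "A = {w. w < n \<and> (\<exists>m. (g^^m) w = y)}"
  define B where "B = {w. w < n \<and> (\<exists>m. (g^^m) w = z)}"
  have pA: "pend A y" unfolding A_def using pend_tree y by blast
  have pB: "pend B z" unfolding B_def using pend_tree z by blast
  have zB: "z \<in> B" using pB by (simp add: pend_def)
  have yB: "y \<notin> B" using pB unfolding y_def by (simp add: pend_def)
  have zA: "z \<in> A" unfolding A_def using z(1) by (auto simp: y_def intro: exI[of _ "Suc 0"])
  have yA: "y \<in> A" using pA by (simp add: pend_def)
  have cA: "c \<notin> A" using pA unfolding c_def by (simp add: pend_def)
  have perA: "w \<notin> A" if "per w" for w
  proof
    assume "w \<in> A" then obtain m where "(g^^m) w = y" unfolding A_def by blast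
    then have "per y" using per_iter[OF that, of m] by simp
    with y show False by simp
  qed
  have c'A: "c' \<notin> A" using perA c' by blast
  have BA: "B \<subseteq> A"
  proof
    fix w assume "w \<in> B"
    then obtain m where "w < n" "(g^^m) w = z" unfolding B_def by blast
    then have "(g^^(Suc m)) w = y" unfolding y_def by simp
    then show "w \<in> A" unfolding A_def using \<open>w < n\<close> by blast
  qed
  let ?d = "gdist n (Gf g)"
  let ?d1 = "gdist n (Gf (g(z:=c)))"
  let ?d2 = "gdist n (Gf (g(c':=y)))"
  have zy1: "1 \<le> ?d z y" using gdist_pos conn z(1) y(1) y(3) by metis
  have c'c1: "1 \<le> ?d c' c" using gdist_pos conn c'n c(2) cc' by metis
  define I1 where "I1 v = (if v \<notin> A then 1 else 0::nat)" for v
  define J1 where "J1 v = (if v \<in> A \<and> v \<notin> B then 1 else 0::nat)" for v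
  define I2 where "I2 v = (if v \<in> A then 1 else 0::nat)" for v
  define J2 where "J2 v = (if v \<notin> A \<and> v \<noteq> c' then 1 else 0::nat)" for v
  have pv1: "?d1 z v + I1 v \<le> ?d z v + J1 v" if v: "v < n" for v
  proof (cases "v \<in> A")
    case False
    have l: "?d z y + 1 + ?d c v \<le> ?d z v" using L1[OF pA zA v False] unfolding c_def .
    obtain p where p: "p 0 = c" "p (?d c v) = v" "\<forall>i<?d c v. adj n (Gf g) (p i) (p (Suc i))"
      "\<forall>i\<le>?d c v. (p i \<in> A \<longleftrightarrow> c \<in> A)"
      using stay[OF pA c(2) v] cA False by metis
    have "walk_len n (Gf (g(z:=c))) c v (?d c v)"
      by (rule transfer_walk_avoid[OF p(1,2,3)]) (use p(4) cA zA in auto)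
    then have "walk_len n (Gf (g(z:=c))) z v (Suc (?d c v))"
      using walk_Cons adj_upd_new[OF z(1) c(2)] by blast
    then have "?d1 z v \<le> Suc (?d c v)" by (rule gdist_le)
    then show ?thesis using l zy1 False by (simp add: I1_def J1_def)
  next
    case True
    show ?thesis
    proof (cases "v \<in> B")
      case True
      obtain p where p: "p 0 = z" "p (?d z v) = v" "\<forall>i<?d z v. adj n (Gf g) (p i) (p (Suc i))"
        "\<forall>i\<le>?d z v. (p i \<in> B \<longleftrightarrow> z \<in> B)"
        using stay[OF pB z(1) v] zB True by metis
      have "\<forall>i<?d z v. adj n (Gf (g(z:=c))) (p i) (p (Suc i))"
      proof (intro allI impI)
        fix i assume i: "i < ?d z v"
        have "p i \<in> B" "p (Suc i) \<in> B" using p(4) zB i by auto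
        then show "adj n (Gf (g(z:=c))) (p i) (p (Suc i))"
          using transfer_step_gen[OF p(3)[rule_format, OF i]] yB unfolding y_def by metis
      qed
      then have "walk_len n (Gf (g(z:=c))) z v (?d z v)" using walk_of_steps p(1,2) by metis
      then have "?d1 z v \<le> ?d z v" by (rule gdist_le)
      then show ?thesis using \<open>v \<in> A\<close> by (simp add: I1_def J1_def)
    next
      case False
      have l: "?d z z + 1 + ?d y v \<le> ?d z v" using L1[OF pB zB v False] unfolding y_def .
      obtain p where p: "p 0 = y" "p (?d y v) = v" "\<forall>i<?d y v. adj n (Gf g) (p i) (p (Suc i))"
        "\<forall>i\<le>?d y v. (p i \<in> B \<longleftrightarrow> y \<in> B)"
        using stay[OF pB y(1) v] yB False by metis
      have "walk_len n (Gf (g(z:=c))) y v (?d y v)"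
        by (rule transfer_walk_avoid[OF p(1,2,3)]) (use p(4) yB zB in auto)
      moreover have "adj n (Gf (g(z:=c))) c y"
        using adj_sym[OF adj_upd[OF y(1) y(3)]] unfolding c_def by simp
      ultimately have "walk_len n (Gf (g(z:=c))) z v (Suc (Suc (?d y v)))"
        using walk_Cons adj_upd_new[OF z(1) c(2)] by blast
      then have "?d1 z v \<le> Suc (Suc (?d y v))" by (rule gdist_le)
      then show ?thesis using l \<open>v \<in> A\<close> False by (simp add: I1_def J1_def gdist_self)
    qed
  qed
  have pv2: "?d2 c' v + I2 v \<le> ?d c' v + J2 v" if v: "v < n" for v
  proof (cases "v \<in> A")
    case True
    have l: "?d c' c + 1 + ?d y v \<le> ?d c' v" using L2[OF pA c'n c'A True] unfolding c_def .
    obtain p where p: "p 0 = y" "p (?d y v) = v" "\<forall>i<?d y v. adj n (Gf g) (p i) (p (Suc i))"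
      "\<forall>i\<le>?d y v. (p i \<in> A \<longleftrightarrow> y \<in> A)"
      using stay[OF pA y(1) v] yA True by metis
    have "walk_len n (Gf (g(c':=y))) y v (?d y v)"
      by (rule transfer_walk_avoid[OF p(1,2,3)]) (use p(4) yA c'A in auto)
    then have "walk_len n (Gf (g(c':=y))) c' v (Suc (?d y v))"
      using walk_Cons adj_upd_new[OF c'n y(1)] by blast
    then have "?d2 c' v \<le> Suc (?d y v)" by (rule gdist_le)
    then show ?thesis using l c'c1 True by (simp add: I2_def J2_def)
  next
    case False
    show ?thesis
    proof (cases "v = c'")
      case True then show ?thesis using c'A by (simp add: gdist_self I2_def J2_def)
    next
      case ne: False
      have aw: "adj n (Gf (g(c':=y))) y (g c')"
        using adj_upd[OF y(1) yc'] c' unfolding c_def by simp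
      have "?d2 c' v \<le> ?d c' v + 1" using dev_plus1[OF c'n y(1) yc' aw v] .
      then show ?thesis using False ne by (simp add: I2_def J2_def)
    qed
  qed
  have e1: "cost_sum n (Gf g) z \<le> cost_sum n (Gf (g(z:=c))) z" using eq[OF z(1) c(2)] c z by auto
  have e2: "cost_sum n (Gf g) c' \<le> cost_sum n (Gf (g(c':=y))) c'" using eq[OF c'n y(1) yc'] .
  have "(\<Sum>v<n. ?d1 z v + I1 v) \<le> (\<Sum>v<n. ?d z v + J1 v)" by (rule sum_mono) (use pv1 in auto)
  then have s1: "(\<Sum>v<n. I1 v) \<le> (\<Sum>v<n. J1 v)" using e1 by (simp add: sum.distrib cost_sum_def)
  have "(\<Sum>v<n. ?d2 c' v + I2 v) \<le> (\<Sum>v<n. ?d c' v + J2 v)" by (rule sum_mono) (use pv2 in auto)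
  then have s2: "(\<Sum>v<n. I2 v) \<le> (\<Sum>v<n. J2 v)" using e2 by (simp add: sum.distrib cost_sum_def)
  have s3: "(\<Sum>v<n. J1 v) < (\<Sum>v<n. I2 v)"
    by (rule sum_lt_ex[OF _ z(1)]) (auto simp: J1_def I2_def zA zB)
  have s4: "(\<Sum>v<n. J2 v) < (\<Sum>v<n. I1 v)"
    by (rule sum_lt_ex[OF _ c'n]) (auto simp: J2_def I1_def c'A)
  show False using s1 s2 s3 s4 by linarith
qed

end



context eqg
begin

definition H where "H c = {v. v < n \<and> (v = c \<or> (\<not> per v \<and> g v = c))}"
definition Wt where "Wt c = (\<Sum>v<n. if v \<in> H c then 1 else 0::nat)"
definition rep where "rep x \<longleftrightarrow> (\<exists>i j. i < j \<and> j < 6 \<and> (g^^i) x = (g^^j) x)"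

lemma no_pre: "w < n \<Longrightarrow> g w = v \<Longrightarrow> \<not> per v \<Longrightarrow> False"
  using depth1[of w] per_g by blast

lemma leaf_pend:
  assumes "v < n" "\<not> per v"
  shows "pend {v} v"
  unfolding pend_def using assms gne[of v] no_pre by auto

lemma leaf_dist:
  assumes "v < n" "\<not> per v" "u < n" "per u"
  shows "gdist n (Gf g) u (g v) + 1 \<le> gdist n (Gf g) u v"
proof -
  have "u \<notin> {v}" using assms by auto
  from L2[OF leaf_pend[OF assms(1,2)] assms(3) this] show ?thesis by (simp add: gdist_self)
qed

lemma cyc_dev:
  assumes px: "per x0" and nr: "\<not> rep x0"
  shows "Wt (g (g x0)) + Wt (g (g (g x0))) \<le> Wt (g x0)"
proof -
  define x1 where "x1 = g x0"
  define x2 where "x2 = g x1"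
  define x3 where "x3 = g x2"
  define x4 where "x4 = g x3"
  define x5 where "x5 = g x4"
  have R: "(g^^i) x0 \<noteq> (g^^j) x0" if "i < j" "j < 6" for i j
    using nr that unfolding rep_def by blast
  have d01: "x0 \<noteq> x1" using R[of 0 "Suc 0"] by (simp add: x1_def)
  have d02: "x0 \<noteq> x2" using R[of 0 "Suc (Suc 0)"] by (simp add: x1_def x2_def)
  have d03: "x0 \<noteq> x3" using R[of 0 "Suc (Suc (Suc 0))"] by (simp add: x1_def x2_def x3_def)
  have d04: "x0 \<noteq> x4" using R[of 0 "Suc (Suc (Suc (Suc 0)))"] by (simp add: x1_def x2_def x3_def x4_def)
  have d05: "x0 \<noteq> x5" using R[of 0 "Suc (Suc (Suc (Suc (Suc 0))))"]
    by (simp add: x1_def x2_def x3_def x4_def x5_def)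
  have d12: "x1 \<noteq> x2" using R[of "Suc 0" "Suc (Suc 0)"] by (simp add: x1_def x2_def)
  have d13: "x1 \<noteq> x3" using R[of "Suc 0" "Suc (Suc (Suc 0))"] by (simp add: x1_def x2_def x3_def)
  have d14: "x1 \<noteq> x4" using R[of "Suc 0" "Suc (Suc (Suc (Suc 0)))"] by (simp add: x1_def x2_def x3_def x4_def)
  have d23: "x2 \<noteq> x3" using R[of "Suc (Suc 0)" "Suc (Suc (Suc 0))"] by (simp add: x1_def x2_def x3_def)
  have p1: "per x1" "per x2" "per x3" using px per_g unfolding x1_def x2_def x3_def by blast+
  have n0: "x0 < n" using px per_lt by blast
  have n1: "x1 < n" "x2 < n" "x3 < n" using p1 per_lt by blast+
  let ?S = "Gf (g(x0 := x2))"
  let ?d = "gdist n (Gf g)"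
  let ?d' = "gdist n ?S"
  have dd2: "2 \<le> ?d x0 x2"
  proof (rule gdist_ge[OF conn[OF n0 n1(2)]])
    fix k assume "k < (2::nat)"
    then have "k = 0 \<or> k = Suc 0" by auto
    then show "\<not> walk_len n (Gf g) x0 x2 k"
      using d02 d03 d12 unfolding x3_def x2_def x1_def by (auto simp: walk_0 walk_1 adj_Gf)
  qed
  have dd3: "3 \<le> ?d x0 x3"
  proof (rule gdist_ge[OF conn[OF n0 n1(3)]])
    fix k assume "k < (3::nat)"
    then have "k = 0 \<or> k = Suc 0 \<or> k = Suc (Suc 0)" by auto
    then show "\<not> walk_len n (Gf g) x0 x3 k"
      using d01 d02 d03 d04 d12 d13 d14 d05 d23 unfolding x5_def x4_def x3_def x2_def x1_def
      by (auto simp: walk_0 walk_1 walk_2 adj_Gf)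
  qed
  have a02: "adj n ?S x0 x2" using adj_upd_new[OF n0 n1(2)] .
  have a23: "adj n ?S x2 x3" using adj_upd[OF n1(2)] d02 unfolding x3_def by auto
  have a21: "adj n ?S x2 (g x0)" using adj_sym[OF adj_upd[OF n1(1)]] d01 unfolding x2_def x1_def by auto
  have aleaf: "adj n ?S c v" if "v < n" "\<not> per v" "g v = c" for c v
  proof -
    have "v \<noteq> x0" using that px by auto
    then show ?thesis using adj_sym[OF adj_upd[OF that(1)]] that(3) by simp
  qed
  define I where "I c v = (if v \<in> H c then 1 else 0::nat)" for c v
  have pv: "?d' x0 v + I x2 v + I x3 v \<le> ?d x0 v + I x1 v" if v: "v < n" for v
  proof -
    consider (h2) "v \<in> H x2" | (h3) "v \<in> H x3" "v \<notin> H x2" | (h1) "v \<in> H x1" "v \<notin> H x2" "v \<notin> H x3"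
      | (o) "v \<notin> H x1" "v \<notin> H x2" "v \<notin> H x3" by blast
    then show ?thesis
    proof cases
      case h2
      have ni: "v \<notin> H x1" "v \<notin> H x3" using h2 p1 d12 d23 unfolding H_def by auto
      show ?thesis
      proof (cases "v = x2")
        case True
        have "?d' x0 v \<le> 1" using gdist_le[OF walk_1[THEN iffD2, OF a02]] True by simp
        then show ?thesis using dd2 True ni h2 by (simp add: I_def)
      next
        case False
        then have lv: "\<not> per v" "g v = x2" using h2 unfolding H_def by auto
        have "walk_len n ?S x0 v (Suc (Suc 0))" using a02 aleaf[OF v lv] walk_2 by blast
        then have "?d' x0 v \<le> 2" using gdist_le by fastforce
        moreover have "?d x0 x2 + 1 \<le> ?d x0 v" using leaf_dist[OF v lv(1) n0 px] lv by simp
        ultimately show ?thesis using dd2 ni h2 by (simp add: I_def)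
      qed
    next
      case h3
      have ni: "v \<notin> H x1" using h3 p1 d12 d13 d23 unfolding H_def by auto
      have w3: "walk_len n ?S x0 x3 (Suc (Suc 0))" using a02 a23 walk_2 by blast
      show ?thesis
      proof (cases "v = x3")
        case True
        have "?d' x0 v \<le> 2" using gdist_le[OF w3] True by simp
        then show ?thesis using dd3 True ni h3 by (simp add: I_def)
      next
        case False
        then have lv: "\<not> per v" "g v = x3" using h3 unfolding H_def by auto
        have "walk_len n ?S x0 v (Suc (Suc (Suc 0)))" using w3 aleaf[OF v lv] walk_Suc by blast
        then have "?d' x0 v \<le> 3" using gdist_le by fastforce
        moreover have "?d x0 x3 + 1 \<le> ?d x0 v" using leaf_dist[OF v lv(1) n0 px] lv by simp
        ultimately show ?thesis using dd3 ni h3 by (simp add: I_def)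
      qed
    next
      case h1
      have "?d' x0 v \<le> ?d x0 v + 1" using dev_plus1[OF n0 n1(2) d02[symmetric] a21 v] .
      then show ?thesis using h1 by (simp add: I_def)
    next
      case o
      let ?k = "?d x0 v"
      obtain p where p: "p 0 = x0" "p ?k = v" "\<forall>i<?k. adj n (Gf g) (p i) (p (Suc i))" "inj_on p {..?k}"
        using shortest_walk[OF conn[OF n0 v]] by blast
      have inj: "i = j" if "i \<le> ?k" "j \<le> ?k" "p i = p j" for i j
        using inj_onD[OF p(4) that(3)] that by auto
      have nx: "p i \<noteq> x0" if "0 < i" "i \<le> ?k" for i
        using inj[of i 0] that p(1) by auto
      have later: "adj n ?S (p i) (p (Suc i))" if "0 < i" "i < ?k" for i
        using transfer_step[OF p(3)[rule_format, of i]] nx[of i] nx[of "Suc i"] that by auto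
      have "?d' x0 v \<le> ?k"
      proof (cases "?k = 0")
        case True then have "v = x0" using p by simp
        then show ?thesis by (simp add: gdist_self)
      next
        case k0: False
        show ?thesis
        proof (cases "p 1 = x1")
          case False
          have "adj n ?S (p 0) (p (Suc 0))"
            using transfer_step_gen[OF p(3)[rule_format, of 0]] k0 False nx[of 1] p(1)
            unfolding x1_def by auto
          then have st: "\<forall>i<?k. adj n ?S (p i) (p (Suc i))"
            using later by (metis neq0_conv)
          have "walk_len n ?S x0 v ?k" using walk_of_steps[of p x0 ?k v, OF p(1,2) st] .
          then show ?thesis by (rule gdist_le)
        next
          case True
          have k1: "?k \<noteq> 1"
          proof
            assume "?k = 1" then have "v = x1" using p True by simp
            then show False using o v unfolding H_def by auto
          qed
          then have k2: "2 \<le> ?k" using k0 by auto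
          have a12: "adj n (Gf g) x1 (p 2)" using p(3)[rule_format, of 1] True k2 by (simp add: numeral_2_eq_2)
          have p2x1: "p 2 \<noteq> x1" using inj[of 2 1] True k2 by auto
          have p2x0: "p 2 \<noteq> x0" using nx[of 2] k2 by auto
          have p2: "p 2 = x2"
          proof (rule ccontr)
            assume ne: "p 2 \<noteq> x2"
            then have gp2: "g (p 2) = x1" "p 2 < n" using a12 unfolding x2_def by (auto simp: adj_Gf)
            have np2: "\<not> per (p 2)"
            proof
              assume "per (p 2)"
              then have "p 2 = x0" using per_inj[OF _ px] gp2 unfolding x1_def by blast
              with p2x0 show False by simp
            qed
            have k3: "3 \<le> ?k"
            proof (rule ccontr)
              assume "\<not> 3 \<le> ?k" then have "?k = 2" using k2 by auto
              then have "v = p 2" using p by simp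
              then show False using o gp2 np2 unfolding H_def by auto
            qed
            have a23': "adj n (Gf g) (p 2) (p 3)" using p(3)[rule_format, of 2] k3
              by (simp add: numeral_3_eq_3 numeral_2_eq_2)
            then have "p 3 = g (p 2) \<or> p 2 = g (p 3)" "p 3 < n" by (auto simp: adj_Gf)
            moreover have "p 3 \<noteq> p 1" using inj[of 3 1] k3 by auto
            ultimately show False using gp2 True no_pre[of "p 3" "p 2"] np2 by auto
          qed
          define q where "q i = (if i = 0 then x0 else p (Suc i))" for i
          have "walk_len n ?S x0 v (?k - 1)"
          proof (rule walk_of_steps[of q])
            show "q 0 = x0" by (simp add: q_def)
            show "q (?k - 1) = v" using p(2) k2 by (simp add: q_def)
            show "\<forall>i<?k - 1. adj n ?S (q i) (q (Suc i))"
            proof (intro allI impI)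
              fix i assume i: "i < ?k - 1"
              show "adj n ?S (q i) (q (Suc i))"
              proof (cases "i = 0")
                case True then show ?thesis using a02 p2 by (simp add: q_def numeral_2_eq_2)
              next
                case False then show ?thesis using later[of "Suc i"] i by (simp add: q_def)
              qed
            qed
          qed
          then show ?thesis using gdist_le by fastforce
        qed
      qed
      then show ?thesis using o by (simp add: I_def)
    qed
  qed
  have e: "cost_sum n (Gf g) x0 \<le> cost_sum n ?S x0" using eq[OF n0 n1(2) d02[symmetric]] .
  have "(\<Sum>v<n. ?d' x0 v + I x2 v + I x3 v) \<le> (\<Sum>v<n. ?d x0 v + I x1 v)"
    by (rule sum_mono) (use pv in auto)
  then have "(\<Sum>v<n. I x2 v) + (\<Sum>v<n. I x3 v) \<le> (\<Sum>v<n. I x1 v)"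
    using e by (simp add: sum.distrib cost_sum_def)
  then show ?thesis unfolding Wt_def I_def x1_def x2_def x3_def .
qed

end



context eqg
begin

lemma rep_back:
  assumes "per c" "per x0" "rep c" shows "rep x0"
proof -
  obtain m where m: "x0 = (g^^m) c" using orbit[OF assms(1,2)] by blast
  obtain i j where ij: "i < j" "j < 6" "(g^^i) c = (g^^j) c" using assms(3) unfolding rep_def by blast
  have "(g^^i) x0 = (g^^m) ((g^^i) c)" using m iter_comm[of i m c] by simp
  also have "\<dots> = (g^^m) ((g^^j) c)" using ij by simp
  also have "\<dots> = (g^^j) x0" using m iter_comm[of j m c] by simp
  finally show ?thesis using ij unfolding rep_def by blast
qed

lemma Wt_pos: "c < n \<Longrightarrow> 1 \<le> Wt c"
proof -
  assume c: "c < n"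
  have "(if c \<in> H c then 1 else 0::nat) \<le> Wt c"
    unfolding Wt_def by (rule member_le_sum) (use c in auto)
  then show ?thesis using c by (simp add: H_def)
qed

lemma all_rep:
  assumes "per x0" shows "rep x0"
proof (rule ccontr)
  assume nr: "\<not> rep x0"
  have nrc: "\<not> rep c" if "per c" for c using rep_back[OF that assms] nr by blast
  have key: "Wt (g (g c)) + Wt (g (g (g c))) \<le> Wt (g c)" if "per c" for c
    using cyc_dev[OF that nrc[OF that]] .
  let ?C = "{c. per c}"
  have fin: "finite ?C" using per_lt finite_subset[of ?C "{..<n}"] by auto
  have ne: "?C \<noteq> {}" using assms by blast
  have "Max (Wt ` ?C) \<in> Wt ` ?C" using fin ne by (intro Max_in) auto
  then obtain c where c: "per c" "Wt c = Max (Wt ` ?C)" by auto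
  have cmax: "Wt c' \<le> Wt c" if "per c'" for c' using c(2) fin that by (simp add: Max_ge)
  obtain c1 where c1: "per c1" "g c1 = c" using per_pred[OF c(1)] by blast
  obtain c0 where c0: "per c0" "g c0 = c1" using per_pred[OF c1(1)] by blast
  have "Wt c + Wt (g c) \<le> Wt c1" using key[OF c0(1)] c0 c1 by simp
  moreover have "1 \<le> Wt (g c)" using Wt_pos gn per_lt c(1) by blast
  moreover have "Wt c1 \<le> Wt c" using cmax c1 by blast
  ultimately show False by linarith
qed

lemma cycle_unique:
  assumes "is_cycle n (Gf g) C"
  shows "C = {(c, g c) | c. per c}"
proof -
  obtain vs es where L: "length vs \<ge> 2" "length es = length vs" "distinct vs" "distinct es"
     "set es \<subseteq> arcs n (Gf g)" "C = set es"
     and E: "\<forall>m<length vs. es ! m = (vs ! m, vs ! (Suc m mod length vs)) \<or>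
                        es ! m = (vs ! (Suc m mod length vs), vs ! m)"
    using assms unfolding is_cycle_def by blast
  define l where "l = length vs"
  define V where "V = set vs"
  have arc: "snd e = g (fst e) \<and> fst e < n" if "e \<in> set es" for e
    using L(5) that by (auto simp: arcs_Gf)
  have ends: "fst e \<in> V \<and> snd e \<in> V" if ein: "e \<in> set es" for e
  proof -
    obtain m where m: "m < length es" "e = es ! m" using ein by (auto simp: in_set_conv_nth)
    then have m: "m < l" "e = es ! m" using L(2) by (auto simp: l_def)
    have "Suc m mod l < l" using L(1) unfolding l_def by (intro mod_less_divisor) linarith
    then have "vs ! m \<in> V" "vs ! (Suc m mod l) \<in> V" using m by (auto simp: V_def l_def)
    then show ?thesis using E m unfolding l_def by auto
  qed
  have fst_inj: "inj_on fst (set es)"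
  proof (rule inj_onI)
    fix e1 e2 assume "e1 \<in> set es" "e2 \<in> set es" "fst e1 = fst e2"
    then show "e1 = e2" using arc[of e1] arc[of e2] by (simp add: prod_eq_iff)
  qed
  have fstV: "fst ` set es = V"
  proof (rule card_subset_eq)
    show "finite V" by (simp add: V_def)
    show "fst ` set es \<subseteq> V" using ends by auto
    have "card (fst ` set es) = card (set es)" using fst_inj by (rule card_image)
    also have "\<dots> = length es" using L(4) by (rule distinct_card)
    also have "\<dots> = card V" using L(2,3) by (simp add: V_def distinct_card)
    finally show "card (fst ` set es) = card V" .
  qed
  have Vn: "a < n" if "a \<in> V" for a using that fstV arc by auto
  have closed: "g a \<in> V" if aV: "a \<in> V" for a
  proof -
    obtain e where "e \<in> set es" "fst e = a" using aV fstV by auto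
    then show ?thesis using arc[of e] ends[of e] by simp
  qed
  have head: "\<exists>t\<in>V. g t = a" if aV: "a \<in> V" for a
  proof -
    obtain m where m: "m < l" "a = vs ! m" using aV by (auto simp: in_set_conv_nth V_def l_def)
    have l2: "l \<ge> 2" using L(1) by (simp add: l_def)
    define m' where "m' = (m + l - 1) mod l"
    have m'l: "m' < l" using l2 unfolding m'_def by (intro mod_less_divisor) linarith
    have "Suc m' mod l = Suc (m + l - 1) mod l" unfolding m'_def by (rule mod_Suc_eq)
    also have "Suc (m + l - 1) = m + l" using l2 by simp
    finally have sm': "Suc m' mod l = m" using m(1) by simp
    have mm': "m' \<noteq> m"
    proof
      assume "m' = m"
      then have "Suc m mod l = m" using sm' by simp
      show False
      proof (cases "Suc m < l")
        case True then show False using \<open>Suc m mod l = m\<close> by simp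
      next
        case False then have "Suc m = l" using m(1) by simp
        then show False using \<open>Suc m mod l = m\<close> l2 by simp
      qed
    qed
    have "es ! m' = (vs ! m', vs ! (Suc m' mod l)) \<or> es ! m' = (vs ! (Suc m' mod l), vs ! m')"
      using E m'l unfolding l_def by blast
    then have E': "es ! m' = (vs ! m', a) \<or> es ! m' = (a, vs ! m')" using sm' m(2) by simp
    have Em: "es ! m = (a, vs ! (Suc m mod l)) \<or> es ! m = (vs ! (Suc m mod l), a)"
      using E m unfolding l_def by blast
    have in1: "es ! m' \<in> set es" "es ! m \<in> set es" using m'l m(1) L(2) by (auto simp: l_def)
    have sml: "Suc m mod l < l" using l2 by (intro mod_less_divisor) linarith
    have vV: "vs ! m' \<in> V" "vs ! (Suc m mod l) \<in> V" using m'l sml by (auto simp: V_def l_def)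
    show ?thesis
    proof (cases "es ! m' = (vs ! m', a)")
      case True then show ?thesis using arc[OF in1(1)] vV by auto
    next
      case F1: False
      show ?thesis
      proof (cases "es ! m = (vs ! (Suc m mod l), a)")
        case True then show ?thesis using arc[OF in1(2)] vV by auto
      next
        case False
        then have "fst (es ! m') = fst (es ! m)" using E' Em F1 by auto
        then have "es ! m' = es ! m" using inj_onD[OF fst_inj _ in1] by blast
        then have "m' = m" using L(4) m'l m(1) L(2) by (simp add: nth_eq_iff_index_eq l_def)
        with mm' show ?thesis by simp
      qed
    qed
  qed
  have VC: "V \<subseteq> {c. per c}"
  proof (rule ccontr)
    assume "\<not> V \<subseteq> {c. per c}"
    define B where "B = V - {c. per c}"
    have Bne: "B \<noteq> {}" using \<open>\<not> V \<subseteq> {c. per c}\<close> by (auto simp: B_def)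
    have Bfin: "finite B" by (simp add: B_def V_def)
    have "Max (dep ` B) \<in> dep ` B" using Bne Bfin by (intro Max_in) auto
    then obtain a where a: "a \<in> B" "dep a = Max (dep ` B)" by auto
    obtain t where t: "t \<in> V" "g t = a" using head a(1) by (auto simp: B_def)
    have tn: "\<not> per t" using t a(1) per_g by (auto simp: B_def)
    then have tB: "t \<in> B" using t by (simp add: B_def)
    have "dep t = Suc (dep a)" using dep_Suc[OF Vn[OF t(1)] tn] t by simp
    moreover have "dep t \<le> dep a" using tB Bfin a(2) by (simp add: Max_ge)
    ultimately show False by simp
  qed
  have CV: "{c. per c} \<subseteq> V"
  proof
    fix c assume "c \<in> {c. per c}"
    then have pc: "per c" by simp
    have "V \<noteq> {}" using L(1) by (auto simp: V_def)
    then obtain a where a: "a \<in> V" by blast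
    then have "per a" using VC by auto
    then obtain m where "c = (g^^m) a" using orbit pc by blast
    moreover have "(g^^m) a \<in> V" for m by (induction m) (use a closed in auto)
    ultimately show "c \<in> V" by simp
  qed
  show ?thesis
  proof
    show "C \<subseteq> {(c, g c) | c. per c}"
    proof
      fix e assume "e \<in> C"
      then have "e \<in> set es" using L(6) by simp
      then have "e = (fst e, g (fst e))" "fst e \<in> V" using arc[of e] ends[of e] by (auto simp: prod_eq_iff)
      then have "e = (fst e, g (fst e))" "per (fst e)" using VC by auto
      then show "e \<in> {(c, g c) | c. per c}" by blast
    qed
    show "{(c, g c) | c. per c} \<subseteq> C"
    proof
      fix e assume "e \<in> {(c, g c) | c. per c}"
      then obtain c where c: "e = (c, g c)" "per c" by blast
      then have "c \<in> fst ` set es" using CV fstV by auto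
      then obtain e' where "e' \<in> set es" "fst e' = c" by auto
      then have "e' = e" using arc c by (auto simp: prod_eq_iff)
      then show "e \<in> C" using \<open>e' \<in> set es\<close> L(6) by simp
    qed
  qed
qed

end



context eqg
begin

lemma main_g:
  assumes n0: "0 < n"
  shows "connected_U n (Gf g) \<and> (\<exists>!C. is_cycle n (Gf g) C) \<and>
         (\<forall>C. is_cycle n (Gf g) C \<longrightarrow>
              card (cycle_vertices C) \<le> 5 \<and>
              (\<forall>u<n. u \<in> cycle_vertices C \<or> (\<exists>w\<in>cycle_vertices C. adj n (Gf g) u w)))"
proof -
  define x0 where "x0 = (g^^n) 0"
  have px: "per x0" using per_reach n0 unfolding x0_def by blast
  have x0n: "x0 < n" using px per_lt by blast
  define p where "p = (LEAST q. q > 0 \<and> (g^^q) x0 = x0)"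
  have pp: "p > 0 \<and> (g^^p) x0 = x0"
    using px unfolding per_def p_def by (metis (mono_tags, lifting) LeastI)
  have pmin: "(g^^i) x0 \<noteq> x0" if "0 < i" "i < p" for i
    using not_less_Least[of i "\<lambda>q. q > 0 \<and> (g^^q) x0 = x0"] that p_def by blast
  have pmod: "(g^^m) x0 = (g^^(m mod p)) x0" for m
  proof -
    have "(g^^m) x0 = (g^^(m mod p + p * (m div p))) x0" by simp
    also have "\<dots> = (g^^(m mod p)) ((g^^(p * (m div p))) x0)" by (simp only: funpow_add o_apply)
    also have "(g^^(p * (m div p))) x0 = x0" using iter_mult pp by blast
    finally show ?thesis by simp
  qed
  have pdist: "(g^^i) x0 \<noteq> (g^^j) x0" if ij: "i < j" "j < p" for i j
  proof
    assume e: "(g^^i) x0 = (g^^j) x0"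
    have "(g^^(p - j + i)) x0 = (g^^(p - j)) ((g^^i) x0)" by (simp add: funpow_add)
    also have "\<dots> = (g^^(p - j)) ((g^^j) x0)" using e by simp
    also have "\<dots> = (g^^(p - j + j)) x0" by (simp add: funpow_add)
    also have "\<dots> = x0" using ij pp by simp
    finally have e2: "(g^^(p - j + i)) x0 = x0" .
    have "0 < p - j + i" "p - j + i < p" using ij by auto
    from pmin[OF this] e2 show False by simp
  qed
  have inj: "inj_on (\<lambda>i. (g^^i) x0) {..<p}"
  proof (rule inj_onI, rule ccontr)
    fix i j assume "i \<in> {..<p}" "j \<in> {..<p}" "(g^^i) x0 = (g^^j) x0" "i \<noteq> j"
    then show False using pdist[of i j] pdist[of j i] by (auto simp: linorder_neq_iff)
  qed
  have Cyc: "{c. per c} = (\<lambda>i. (g^^i) x0) ` {..<p}"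
  proof
    show "{c. per c} \<subseteq> (\<lambda>i. (g^^i) x0) ` {..<p}"
    proof
      fix c assume "c \<in> {c. per c}"
      then obtain m where "c = (g^^m) x0" using orbit[OF px] by auto
      then have "c = (g^^(m mod p)) x0" using pmod by simp
      moreover have "m mod p < p" using pp by simp
      ultimately show "c \<in> (\<lambda>i. (g^^i) x0) ` {..<p}" by blast
    qed
    show "(\<lambda>i. (g^^i) x0) ` {..<p} \<subseteq> {c. per c}" using per_iter[OF px] by auto
  qed
  have p2: "2 \<le> p"
  proof (rule ccontr)
    assume "\<not> 2 \<le> p" then have "p = 1" using pp by simp
    then show False using pp gne[OF x0n] by simp
  qed
  have p5: "p \<le> 5"
  proof (rule ccontr)
    assume "\<not> p \<le> 5"
    obtain i j where "i < j" "j < 6" "(g^^i) x0 = (g^^j) x0" using all_rep[OF px] unfolding rep_def by blast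
    then show False using pdist[of i j] \<open>\<not> p \<le> 5\<close> by simp
  qed
  have cardC: "card {c. per c} = p" using Cyc inj by (simp add: card_image)
  define C0 where "C0 = {(c, g c) | c. per c}"
  have cv: "cycle_vertices C0 = {c. per c}"
    unfolding cycle_vertices_def C0_def using per_g by force
  define vs where "vs = map (\<lambda>i. (g^^i) x0) [0..<p]"
  define es where "es = map (\<lambda>i. ((g^^i) x0, (g^^(Suc i)) x0)) [0..<p]"
  have isC0: "is_cycle n (Gf g) C0"
    unfolding is_cycle_def
  proof (intro exI[of _ vs] exI[of _ es] conjI)
    show "2 \<le> length vs" using p2 by (simp add: vs_def)
    show "length es = length vs" by (simp add: vs_def es_def)
    show "distinct vs" unfolding vs_def using inj by (simp add: distinct_map atLeast0LessThan)
    have "inj_on (\<lambda>i. ((g^^i) x0, (g^^(Suc i)) x0)) {..<p}"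
      using inj unfolding inj_on_def by auto
    then show "distinct es" unfolding es_def by (simp add: distinct_map atLeast0LessThan)
    show "set es \<subseteq> arcs n (Gf g)"
      unfolding es_def arcs_Gf using iter_lt[OF x0n] gn by auto
    show "C0 = set es"
      unfolding C0_def es_def using Cyc by (auto simp: atLeast0LessThan)
    show "\<forall>m<length vs. es ! m = (vs ! m, vs ! (Suc m mod length vs)) \<or>
                        es ! m = (vs ! (Suc m mod length vs), vs ! m)"
    proof (intro allI impI disjI1)
      fix m assume m: "m < length vs"
      then have mp: "m < p" by (simp add: vs_def)
      have "Suc m mod p < p" using pp by simp
      then have "vs ! (Suc m mod length vs) = (g^^(Suc m mod p)) x0" by (simp add: vs_def)
      also have "\<dots> = (g^^(Suc m)) x0" using pmod[of "Suc m"] by simp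
      finally show "es ! m = (vs ! m, vs ! (Suc m mod length vs))" using mp by (simp add: vs_def es_def)
    qed
  qed
  have conU: "connected_U n (Gf g)" unfolding connected_U_def using conn by blast
  have uniq: "\<exists>!C. is_cycle n (Gf g) C"
    using isC0 cycle_unique unfolding C0_def by blast
  have rest: "card (cycle_vertices C) \<le> 5 \<and>
              (\<forall>u<n. u \<in> cycle_vertices C \<or> (\<exists>w\<in>cycle_vertices C. adj n (Gf g) u w))"
    if "is_cycle n (Gf g) C" for C
  proof -
    have "C = C0" using cycle_unique[OF that] unfolding C0_def .
    then have cvC: "cycle_vertices C = {c. per c}" using cv by simp
    have "\<forall>u<n. u \<in> cycle_vertices C \<or> (\<exists>w\<in>cycle_vertices C. adj n (Gf g) u w)"
    proof (intro allI impI)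
      fix u assume u: "u < n"
      show "u \<in> cycle_vertices C \<or> (\<exists>w\<in>cycle_vertices C. adj n (Gf g) u w)"
      proof (cases "per u")
        case True then show ?thesis using cvC by simp
      next
        case False
        then have "per (g u)" using depth1[OF u] by simp
        moreover have "adj n (Gf g) u (g u)" using u gn[OF u] by (simp add: adj_Gf)
        ultimately show ?thesis using cvC by auto
      qed
    qed
    then show ?thesis using cvC cardC p5 by simp
  qed
  show ?thesis using conU uniq rest by blast
qed

end



lemma arcs_eq_adj: "arcs n S = arcs n S' \<Longrightarrow> adj n S = adj n S'"
  unfolding adj_def by (intro ext) simp

lemma arcs_eq_walk: "arcs n S = arcs n S' \<Longrightarrow> walk_len n S = walk_len n S'"
  unfolding walk_len_def using arcs_eq_adj[of n S S'] by (intro ext) simp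

lemma arcs_eq_cost: "arcs n S = arcs n S' \<Longrightarrow> cost_sum n S u = cost_sum n S' u"
proof -
  assume a: "arcs n S = arcs n S'"
  have w: "walk_len n S = walk_len n S'" using arcs_eq_walk[OF a] .
  have "gdist n S = gdist n S'" unfolding gdist_def reachable_def w ..
  then show ?thesis unfolding cost_sum_def by simp
qed

lemma arcs_eq_conn: "arcs n S = arcs n S' \<Longrightarrow> connected_U n S = connected_U n S'"
  unfolding connected_U_def reachable_def using arcs_eq_walk[of n S S'] by simp

lemma arcs_eq_cyc: "arcs n S = arcs n S' \<Longrightarrow> is_cycle n S = is_cycle n S'"
  unfolding is_cycle_def by (intro ext) simp

theorem mainTheorem6:
  fixes n :: nat and S :: "nat \<Rightarrow> nat set"
  assumes "n \<ge> 2"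
    and "sum_equilibrium n (\<lambda>_. 1) S"
  shows "connected_U n S \<and>
         (\<exists>!C. is_cycle n S C) \<and>
         (\<forall>C. is_cycle n S C \<longrightarrow>
              card (cycle_vertices C) \<le> 5 \<and>
              (\<forall>u<n. u \<in> cycle_vertices C \<or> (\<exists>w\<in>cycle_vertices C. adj n S u w)))"
proof -
  have vp: "valid_profile n (\<lambda>_. 1) S"
    and eqS: "\<forall>i<n. \<forall>T. valid_strategy n (\<lambda>_. 1) i T \<longrightarrow> cost_sum n S i \<le> cost_sum n (S(i := T)) i"
    using assms(2) unfolding sum_equilibrium_def by auto
  define g where "g i = the_elem (S i)" for i
  have Sg: "S i = {g i} \<and> g i < n \<and> g i \<noteq> i" if i: "i < n" for i
  proof -
    have vs: "S i \<subseteq> {..<n} - {i}" "card (S i) = 1"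
      using vp i unfolding valid_profile_def valid_strategy_def by auto
    then obtain x where "S i = {x}" using card_1_singleton_iff[of "S i"] by auto
    then show ?thesis using vs unfolding g_def by auto
  qed
  have arcsS: "arcs n S = arcs n (Gf g)" unfolding arcs_def Gf_def using Sg by auto
  have arcsT: "arcs n (S(x := {w})) = arcs n (Gf (g(x:=w)))" for x w
    unfolding arcs_def Gf_def using Sg by auto
  interpret eqg n g
  proof (unfold_locales)
    show "\<And>i. i < n \<Longrightarrow> g i < n" "\<And>i. i < n \<Longrightarrow> g i \<noteq> i" using Sg by auto
    fix x w assume xw: "x < n" "w < n" "w \<noteq> x"
    have "valid_strategy n (\<lambda>_. 1) x {w}" using xw unfolding valid_strategy_def by auto
    then have "cost_sum n S x \<le> cost_sum n (S(x := {w})) x" using eqS xw by blast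
    then show "cost_sum n (Gf g) x \<le> cost_sum n (Gf (g(x := w))) x"
      using arcs_eq_cost[OF arcsS] arcs_eq_cost[OF arcsT] by simp
  qed
  have "0 < n" using assms(1) by simp
  from main_g[OF this] show ?thesis
    using arcs_eq_adj[OF arcsS] arcs_eq_conn[OF arcsS] arcs_eq_cyc[OF arcsS] by simp
qed


end
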